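(* Let $L\ge 2$ be an integer, $\delta>0$, and let $\mathscr A_{L,\delta}:=\{(2j-L-1)\delta: j=1,\dots,L\}$ (the arithmetic progression of length $L$, spacing $2\delta$, symmetric about $0$). Let $H=I-\tilde H$ be an $m\times m$ matrix where $\tilde H$ is strictly lower triangular, and let $\mu\ge0$ satisfy $\|\tilde H\|_{\infty\to\infty}+\mu/\delta\le L$. Then there exists a map $Q:[-\mu,\mu]^m\to\mathscr A_{L,\delta}^m$ (computable by a recursive algorithm that determines $q_n$ from $y_1,\dots,y_n$ and $q_1,\dots,q_{n-1}$) such that for every $y\in[-\mu,\mu]^m$, with $q:=Q(y)$, the vector $u:=H^{-1}(y-q)$ satisfies $y-q=Hu$ and $\|u\|_\infty\le\delta$.
   Context: $\|A\|_{\infty\to\infty}$ denotes the operator norm of $A$ from $\ell^\infty$ to $\ell^\infty$ (maximum absolute row sum). Since $H$ is lower triangular with unit diagonal, it is invertible. *)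

theory Defs
  imports Complex_Main
begin

text \<open>Vectors in R^m are functions nat => real (only indices i < m matter);
  m x m matrices are functions nat => nat => real (only indices i, j < m matter).
  Index 0 corresponds to the paper's index 1.\<close>

definition alphabet :: "nat \<Rightarrow> real \<Rightarrow> real set" where
  "alphabet L \<delta> = {(2 * real j - real L - 1) * \<delta> | j. 1 \<le> j \<and> j \<le> L}"

definition strictly_lower :: "nat \<Rightarrow> (nat \<Rightarrow> nat \<Rightarrow> real) \<Rightarrow> bool" where
  "strictly_lower m A \<longleftrightarrow> (\<forall>i<m. \<forall>j<m. i \<le> j \<longrightarrow> A i j = 0)"

text \<open>Operator norm l^infty -> l^infty: maximum absolute row sum (0 for m = 0).\<close>
definition inf_inf_norm :: "nat \<Rightarrow> (nat \<Rightarrow> nat \<Rightarrow> real) \<Rightarrow> real" where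
  "inf_inf_norm m A = Max (insert 0 {(\<Sum>j<m. \<bar>A i j\<bar>) | i. i < m})"

definition H_mult :: "nat \<Rightarrow> (nat \<Rightarrow> nat \<Rightarrow> real) \<Rightarrow> (nat \<Rightarrow> real) \<Rightarrow> nat \<Rightarrow> real" where
  "H_mult m Ht u i = u i - (\<Sum>j<m. Ht i j * u j)"

end

theory Submission
  imports Defs
begin

definition rnd :: "nat \<Rightarrow> real \<Rightarrow> real \<Rightarrow> real" where
  "rnd L \<delta> v = (2 * real_of_int (max 1 (min (int L) \<lceil>(v/\<delta> + real L)/2\<rceil>)) - real L - 1) * \<delta>"

lemma rnd_in:
  assumes "L \<ge> 1" shows "rnd L \<delta> v \<in> alphabet L \<delta>"
proof -
  define k where "k = max 1 (min (int L) \<lceil>(v/\<delta> + real L)/2\<rceil>)"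
  have k1: "k \<ge> 1" and kL: "k \<le> int L" using assms by (auto simp: k_def)
  have "real (nat k) = real_of_int k" using k1 by simp
  then show ?thesis unfolding alphabet_def rnd_def k_def[symmetric]
    using k1 kL by (intro CollectI exI[of _ "nat k"]) auto
qed

lemma rnd_close:
  assumes d: "\<delta> > 0" and v: "\<bar>v\<bar> \<le> real L * \<delta>" and L: "L \<ge> 1"
  shows "\<bar>v - rnd L \<delta> v\<bar> \<le> \<delta>"
proof -
  define x where "x = v / \<delta>"
  have vx: "v = x * \<delta>" using d by (simp add: x_def)
  have xb: "\<bar>x\<bar> \<le> real L" using v d by (simp add: x_def abs_divide pos_divide_le_eq)
  define c where "c = \<lceil>(x + real L)/2\<rceil>"
  have c1a: "(x + real L)/2 \<le> c" unfolding c_def by (rule le_of_int_ceiling)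
  have c1b: "c < (x + real L)/2 + 1" unfolding c_def using ceiling_correct[of "(x + real L)/2"] by linarith
  note c1 = c1a c1b
  have c0: "c \<ge> 0" using c1 xb by (simp add: abs_le_iff)
  have cL: "c \<le> int L"
  proof -
    have "(x + real L)/2 \<le> real L" using xb by (simp add: abs_le_iff)
    hence "c \<le> \<lceil>real L\<rceil>" unfolding c_def by (rule ceiling_mono)
    thus ?thesis by simp
  qed
  define k where "k = max 1 (min (int L) c)"
  have r: "rnd L \<delta> v = (2 * real_of_int k - real L - 1) * \<delta>"
    unfolding rnd_def k_def c_def x_def by simp
  have "\<bar>x - (2 * real_of_int k - real L - 1)\<bar> \<le> 1"
  proof (cases "c = 0")
    case True
    hence "x + real L \<le> 0" using c1 by simp
    hence "x = - real L" using xb by (simp add: abs_le_iff)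
    moreover have "k = 1" using True L by (simp add: k_def)
    ultimately show ?thesis by simp
  next
    case False
    hence "k = c" using c0 cL by (simp add: k_def)
    moreover have "2 * real_of_int c < x + real L + 2" "x + real L \<le> 2 * real_of_int c" using c1 by (auto simp: field_simps)
    ultimately show ?thesis unfolding abs_le_iff by linarith
  qed
  hence "\<bar>x - (2 * real_of_int k - real L - 1)\<bar> * \<delta> \<le> \<delta>" using d
    by (simp add: mult_le_cancel_right1)
  moreover have "\<bar>v - rnd L \<delta> v\<bar> = \<bar>x - (2 * real_of_int k - real L - 1)\<bar> * \<delta>"
  proof -
    have "v - rnd L \<delta> v = (x - (2 * real_of_int k - real L - 1)) * \<delta>"
      unfolding r by (simp add: vx algebra_simps)
    thus ?thesis using d by (simp add: abs_mult)
  qed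
  ultimately show ?thesis by simp
qed

primrec U :: "nat \<Rightarrow> real \<Rightarrow> (nat\<Rightarrow>nat\<Rightarrow>real) \<Rightarrow> (nat \<Rightarrow> real) \<Rightarrow> nat \<Rightarrow> nat \<Rightarrow> real" where
  "U L \<delta> Ht y 0 = (\<lambda>_. 0)"
| "U L \<delta> Ht y (Suc n) = (let v = y n + (\<Sum>j<n. Ht n j * U L \<delta> Ht y n j)
      in (U L \<delta> Ht y n)(n := v - rnd L \<delta> v))"

definition V where "V L \<delta> Ht y n = y n + (\<Sum>j<n. Ht n j * U L \<delta> Ht y n j)"
definition uu where "uu L \<delta> Ht y j = U L \<delta> Ht y (Suc j) j"

lemma U_stable: "j < N \<Longrightarrow> U L \<delta> Ht y N j = uu L \<delta> Ht y j"
proof (induction N)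
  case 0 then show ?case by simp
next
  case (Suc n)
  show ?case
  proof (cases "j = n")
    case True then show ?thesis by (simp add: uu_def)
  next
    case False
    then have "j < n" using Suc.prems by simp
    then show ?thesis using Suc.IH False by (simp add: Let_def)
  qed
qed

lemma V_eq: "V L \<delta> Ht y n = y n + (\<Sum>j<n. Ht n j * uu L \<delta> Ht y j)"
  unfolding V_def by (simp add: U_stable)

lemma uu_eq: "uu L \<delta> Ht y n = V L \<delta> Ht y n - rnd L \<delta> (V L \<delta> Ht y n)"
  unfolding uu_def V_def by (simp add: Let_def)

lemma U_causal: "(\<forall>i<N. y i = y' i) \<Longrightarrow> U L \<delta> Ht y N = U L \<delta> Ht y' N"
  by (induction N) (auto simp: Let_def)

theorem proposition1:
  fixes L m :: nat and \<delta> \<mu> :: real and Ht :: "nat \<Rightarrow> nat \<Rightarrow> real"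
  assumes "L \<ge> 2" and "\<delta> > 0" and "\<mu> \<ge> 0"
    and "strictly_lower m Ht"
    and "inf_inf_norm m Ht + \<mu> / \<delta> \<le> real L"
  shows "\<exists>Q :: (nat \<Rightarrow> real) \<Rightarrow> nat \<Rightarrow> real.
    (\<forall>y y' n. (\<forall>i<m. \<bar>y i\<bar> \<le> \<mu>) \<longrightarrow> (\<forall>i<m. \<bar>y' i\<bar> \<le> \<mu>) \<longrightarrow> n < m \<longrightarrow>
        (\<forall>i\<le>n. y i = y' i) \<longrightarrow> Q y n = Q y' n) \<and>
    (\<forall>y. (\<forall>i<m. \<bar>y i\<bar> \<le> \<mu>) \<longrightarrow>
        (\<forall>i<m. Q y i \<in> alphabet L \<delta>) \<and>
        (\<exists>u :: nat \<Rightarrow> real. (\<forall>i<m. y i - Q y i = H_mult m Ht u i) \<and> (\<forall>i<m. \<bar>u i\<bar> \<le> \<delta>)))"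
proof -
  define Q where "Q y n = rnd L \<delta> (V L \<delta> Ht y n)" for y n
  have L1: "L \<ge> 1" using assms(1) by simp
  have causal: "Q y n = Q y' n" if "\<forall>i\<le>n. y i = y' i" for y y' n
  proof -
    have "U L \<delta> Ht y n = U L \<delta> Ht y' n" using that by (intro U_causal) auto
    moreover have "y n = y' n" using that by simp
    ultimately show ?thesis unfolding Q_def V_def by simp
  qed
  have main: "(\<forall>i<m. Q y i \<in> alphabet L \<delta>) \<and>
        (\<exists>u :: nat \<Rightarrow> real. (\<forall>i<m. y i - Q y i = H_mult m Ht u i) \<and> (\<forall>i<m. \<bar>u i\<bar> \<le> \<delta>))"
    if yb: "\<forall>i<m. \<bar>y i\<bar> \<le> \<mu>" for y
  proof -
    let ?u = "uu L \<delta> Ht y"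
    have rows: "(\<Sum>j<m. \<bar>Ht i j\<bar>) \<le> inf_inf_norm m Ht" if "i < m" for i
      unfolding inf_inf_norm_def using that by (intro Max_ge) auto
    have sumeq: "(\<Sum>j<m. Ht i j * f j) = (\<Sum>j<i. Ht i j * f j)" if "i < m" for i f
    proof -
      have "(\<Sum>j<m. Ht i j * f j) = (\<Sum>j\<in>{..<i} \<union> {i..<m}. Ht i j * f j)"
        using that by (intro sum.cong) auto
      also have "\<dots> = (\<Sum>j<i. Ht i j * f j) + (\<Sum>j\<in>{i..<m}. Ht i j * f j)"
        by (rule sum.union_disjoint) auto
      also have "(\<Sum>j\<in>{i..<m}. Ht i j * f j) = 0"
        using assms(4) that by (intro sum.neutral) (auto simp: strictly_lower_def)
      finally show ?thesis by simp
    qed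
    have bound: "\<forall>j<i. \<bar>?u j\<bar> \<le> \<delta>" if "i \<le> m" for i
      using that
    proof (induction i)
      case 0 then show ?case by simp
    next
      case (Suc i)
      have IH: "\<forall>j<i. \<bar>?u j\<bar> \<le> \<delta>" using Suc by simp
      have im: "i < m" using Suc.prems by simp
      have "\<bar>\<Sum>j<i. Ht i j * ?u j\<bar> \<le> (\<Sum>j<i. \<bar>Ht i j * ?u j\<bar>)"
        by (rule sum_abs)
      also have "\<dots> \<le> (\<Sum>j<i. \<bar>Ht i j\<bar> * \<delta>)"
      proof (rule sum_mono)
        fix j assume "j \<in> {..<i}"
        hence "\<bar>?u j\<bar> \<le> \<delta>" using IH by simp
        thus "\<bar>Ht i j * ?u j\<bar> \<le> \<bar>Ht i j\<bar> * \<delta>"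
          unfolding abs_mult by (rule mult_left_mono) simp
      qed
      also have "\<dots> = (\<Sum>j<m. \<bar>Ht i j\<bar> * \<delta>)"
      proof -
        have "(\<Sum>j<m. \<bar>Ht i j\<bar> * \<delta>) = (\<Sum>j\<in>{..<i} \<union> {i..<m}. \<bar>Ht i j\<bar> * \<delta>)"
          using im by (intro sum.cong) auto
        also have "\<dots> = (\<Sum>j<i. \<bar>Ht i j\<bar> * \<delta>) + (\<Sum>j\<in>{i..<m}. \<bar>Ht i j\<bar> * \<delta>)"
          by (rule sum.union_disjoint) auto
        also have "(\<Sum>j\<in>{i..<m}. \<bar>Ht i j\<bar> * \<delta>) = 0"
          using assms(4) im by (intro sum.neutral) (auto simp: strictly_lower_def)
        finally show ?thesis by simp
      qed
      also have "\<dots> = (\<Sum>j<m. \<bar>Ht i j\<bar>) * \<delta>" by (simp add: sum_distrib_right)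
      also have "\<dots> \<le> inf_inf_norm m Ht * \<delta>"
        using rows[OF im] assms(2) by (intro mult_right_mono) auto
      finally have s: "\<bar>\<Sum>j<i. Ht i j * ?u j\<bar> \<le> inf_inf_norm m Ht * \<delta>" .
      have "\<bar>V L \<delta> Ht y i\<bar> \<le> \<mu> + inf_inf_norm m Ht * \<delta>"
      proof -
        have "\<bar>V L \<delta> Ht y i\<bar> \<le> \<bar>y i\<bar> + \<bar>\<Sum>j<i. Ht i j * ?u j\<bar>"
          unfolding V_eq by (rule abs_triangle_ineq)
        moreover have "\<bar>y i\<bar> \<le> \<mu>" using yb im by simp
        ultimately show ?thesis using s by linarith
      qed
      also have "\<dots> = (inf_inf_norm m Ht + \<mu> / \<delta>) * \<delta>"
        using assms(2) by (simp add: distrib_right)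
      also have "\<dots> \<le> real L * \<delta>" using assms(5) assms(2) by (intro mult_right_mono) auto
      finally have "\<bar>?u i\<bar> \<le> \<delta>"
        unfolding uu_eq by (rule rnd_close[OF assms(2) _ L1])
      then show ?case using IH by (metis less_Suc_eq)
    qed
    show ?thesis
    proof (intro conjI allI impI exI[of _ ?u])
      fix i assume "i < m"
      show "Q y i \<in> alphabet L \<delta>" unfolding Q_def by (rule rnd_in[OF L1])
    next
      fix i assume im: "i < m"
      show "y i - Q y i = H_mult m Ht ?u i"
      proof -
        have e1: "?u i = V L \<delta> Ht y i - Q y i" unfolding Q_def by (rule uu_eq)
        have e2: "V L \<delta> Ht y i = y i + (\<Sum>j<i. Ht i j * ?u j)" by (rule V_eq)
        show ?thesis unfolding H_mult_def sumeq[OF im] using e1 e2 by linarith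
      qed
    next
      fix i assume im: "i < m"
      show "\<bar>?u i\<bar> \<le> \<delta>" using bound[of m] im by simp
    qed
  qed
  show ?thesis
    by (rule exI[of _ Q]) (use causal main in blast)
qed

end
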